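(* For $O=(a,b)\in\mathbb{R}^2$ let $g_1(O):=\int_0^1\int_0^1\sqrt{(x-a)^2+(y-b)^2}\,dx\,dy$ (the expected distance from $O$ to a uniform random point of $[0,1]^2$). Then \begin{align*}g_1(O)=\;&A_1(a,b)+A_1(b,a)+A_1(b,1-a)+A_1(1-a,b)\\&+A_1(1-a,1-b)+A_1(1-b,1-a)+A_1(1-b,a)+A_1(a,1-b).\end{align*}
   Context: Define $A_1:\mathbb{R}^2\to\mathbb{R}$ by $A_1(a,b):=\int_0^a\int_0^{bx/a}\sqrt{x^2+y^2}\,dy\,dx$ if $a\ne0$ and $A_1(0,b):=0$ (integrals are oriented/signed). Equivalently, for $a\neq 0$, $A_1(a,b)=\frac{a^3}{6}\log\left(\frac{b}{|a|}+\sqrt{1+\frac{b^2}{a^2}}\right)+\frac{ab}{6}\sqrt{a^2+b^2}$. *)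

theory Defs
  imports "HOL-Analysis.Analysis"
begin

definition oint :: "real \<Rightarrow> real \<Rightarrow> (real \<Rightarrow> real) \<Rightarrow> real" where
  "oint u v f = (if u \<le> v then integral {u..v} f else - integral {v..u} f)"

definition A1 :: "real \<Rightarrow> real \<Rightarrow> real" where
  "A1 a b = (if a = 0 then 0
     else oint 0 a (\<lambda>x. oint 0 (b * x / a) (\<lambda>y. sqrt (x^2 + y^2))))"

definition g1 :: "real \<Rightarrow> real \<Rightarrow> real" where
  "g1 a b = integral {0..1} (\<lambda>y. integral {0..1} (\<lambda>x. sqrt ((x - a)^2 + (y - b)^2)))"

end

theory Submission
  imports Defs
begin

definition Ff :: "real \<Rightarrow> real \<Rightarrow> real" where
  "Ff u v = v/2 * sqrt (u^2+v^2) + u^2/2 * arsinh (v/\<bar>u\<bar>)"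
definition A1f :: "real \<Rightarrow> real \<Rightarrow> real" where
  "A1f a b = a^3/6 * arsinh (b/\<bar>a\<bar>) + a*b/6 * sqrt (a^2+b^2)"

lemma arsinh_bound_pos: "0 \<le> (x::real) \<Longrightarrow> arsinh x \<le> 2 * x"
proof -
  assume x: "0 \<le> x"
  have "sqrt (x^2+1) \<le> x + 1"
    by (rule real_le_lsqrt) (use x in \<open>auto simp: power2_eq_square algebra_simps\<close>)
  hence "ln (x + sqrt (x^2+1)) \<le> ln (1 + 2*x)"
    using arsinh_real_aux[of x] by (subst ln_le_cancel_iff) auto
  also have "\<dots> \<le> 2*x" using ln_add_one_self_le_self[of "2*x"] x by simp
  finally show ?thesis by (simp add: arsinh_real_def)
qed

lemma arsinh_bound: "\<bar>arsinh (x::real)\<bar> \<le> 2 * \<bar>x\<bar>"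
proof (cases "x \<ge> 0")
  case True thus ?thesis using arsinh_bound_pos[of x] arsinh_real_neg_iff[of x] by (simp add: abs_if)
next
  case False
  then show ?thesis using arsinh_bound_pos[of "-x"] by (simp add: abs_if less_imp_le)
qed

lemma oint_ftc:
  assumes "finite S" "continuous_on {min u v..max u v} f"
    "\<And>x. min u v < x \<Longrightarrow> x < max u v \<Longrightarrow> x \<notin> S \<Longrightarrow> (f has_real_derivative f' x) (at x)"
  shows "oint u v f' = f v - f u"
proof (cases "u \<le> v")
  case True
  have "(f' has_integral (f v - f u)) {u..v}"
    apply (rule fundamental_theorem_of_calculus_interior_strong[OF assms(1) True])
    using assms True by (auto simp: has_real_derivative_iff_has_vector_derivative min_def max_def)
  thus ?thesis using True by (simp add: oint_def integral_unique)
next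
  case False
  have "(f' has_integral (f u - f v)) {v..u}"
    apply (rule fundamental_theorem_of_calculus_interior_strong[OF assms(1)])
    using assms False by (auto simp: has_real_derivative_iff_has_vector_derivative min_def max_def)
  thus ?thesis using False by (simp add: oint_def integral_unique)
qed

lemma sqrt_div_aux: "u \<noteq> 0 \<Longrightarrow> sqrt ((v/\<bar>u\<bar>)^2 + 1) = sqrt (u^2+v^2) / \<bar>u\<bar>"
proof -
  assume u: "u \<noteq> 0"
  have "(v/\<bar>u\<bar>)^2 + 1 = (u^2+v^2) / \<bar>u\<bar>^2" using u by (simp add: field_simps)
  thus ?thesis by (simp add: real_sqrt_divide)
qed

lemma d_sqrt: "u^2+v^2 > 0 \<Longrightarrow> ((\<lambda>v. sqrt (u^2+v^2)) has_real_derivative (inverse (sqrt (u^2+v^2)) / 2 * (2* v))) (at v)"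
proof -
  assume pos: "u^2+v^2 > 0"
  have d1: "((\<lambda>v. u^2+v^2) has_real_derivative (2* v)) (at v)"
    by (auto intro!: derivative_eq_intros)
  show ?thesis using DERIV_chain2[OF DERIV_real_sqrt[OF pos] d1] by simp
qed

lemma d_ar: "((\<lambda>v. arsinh (v/\<bar>u\<bar>)) has_real_derivative (1 / sqrt ((v/\<bar>u\<bar>)^2+1) * (1/\<bar>u\<bar>))) (at v)"
proof -
  have d1: "((\<lambda>v. v/\<bar>u\<bar>) has_real_derivative (1/\<bar>u\<bar>)) (at v)"
    using DERIV_cdivide[OF DERIV_ident, where c="\<bar>u\<bar>" and x=v and s=UNIV] by simp
  show ?thesis using DERIV_chain2[OF arsinh_real_has_field_derivative d1] by simp
qed

lemma Ff_deriv:
  assumes "u^2 + v^2 > 0"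
  shows "((\<lambda>v. Ff u v) has_real_derivative sqrt (u^2+v^2)) (at v)"
proof -
  have s: "sqrt (u^2+v^2) > 0" using assms by simp
  have ss: "sqrt (u^2+v^2)^2 = u^2+v^2" using assms by simp
  have dA: "((\<lambda>v. v/2) has_real_derivative (1/2)) (at v)"
    using DERIV_cdivide[OF DERIV_ident, where c=2 and x=v and s=UNIV] by simp
  have D: "((\<lambda>v. v/2 * sqrt (u^2+v^2) + u^2/2 * arsinh (v/\<bar>u\<bar>)) has_real_derivative
     (1/2 * sqrt (u^2+v^2) + inverse (sqrt (u^2+v^2)) / 2 * (2* v) * (v/2)
      + u^2/2 * (1 / sqrt ((v/\<bar>u\<bar>)^2+1) * (1/\<bar>u\<bar>)))) (at v)"
    by (rule DERIV_add[OF DERIV_mult[OF dA d_sqrt[OF assms]] DERIV_cmult[OF d_ar]])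
  have eq: "1/2 * sqrt (u^2+v^2) + inverse (sqrt (u^2+v^2)) / 2 * (2* v) * (v/2)
      + u^2/2 * (1 / sqrt ((v/\<bar>u\<bar>)^2+1) * (1/\<bar>u\<bar>)) = sqrt (u^2+v^2)"
  proof (cases "u = 0")
    case True
    then show ?thesis using s ss by (simp add: field_simps power2_eq_square)
  next
    case False
    then have "sqrt ((v/\<bar>u\<bar>)^2 + 1) = sqrt (u^2+v^2) / \<bar>u\<bar>" by (rule sqrt_div_aux)
    then show ?thesis using s ss False apply (simp only:)
      by (simp add: field_simps power2_eq_square)
  qed
  show ?thesis unfolding Ff_def using DERIV_cong[OF D eq] .
qed

definition Kf :: "real \<Rightarrow> real \<Rightarrow> real" where
  "Kf p q = p^3/6 * arsinh (q/\<bar>p\<bar>) + q^3/6 * arsinh (p/\<bar>q\<bar>) + p*q/3 * sqrt (q^2+p^2)"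

lemma d_abs: "p \<noteq> 0 \<Longrightarrow> (abs has_real_derivative (p/\<bar>p\<bar>)) (at p)"
proof -
  assume p: "p \<noteq> 0"
  have e: "(\<lambda>x::real. sqrt (0^2 + x^2)) = abs" by (auto simp: real_sqrt_abs)
  have pos: "0^2 + p^2 > (0::real)" using p by simp
  have c: "inverse (sqrt (0^2+p^2)) / 2 * (2 * p) = p/\<bar>p\<bar>" using p
    by (simp add: real_sqrt_abs field_simps)
  have "((\<lambda>x::real. sqrt (0^2 + x^2)) has_real_derivative p/\<bar>p\<bar>) (at p)"
    using DERIV_cong[OF d_sqrt[OF pos] c] .
  then show ?thesis by (simp only: e)
qed

lemma d_T1: "p \<noteq> 0 \<Longrightarrow> ((\<lambda>p. arsinh (q/\<bar>p\<bar>)) has_real_derivative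
   (1 / sqrt ((q/\<bar>p\<bar>)^2+1) * ((0 * \<bar>p\<bar> - q * (p/\<bar>p\<bar>)) / (\<bar>p\<bar> * \<bar>p\<bar>)))) (at p)"
proof -
  assume p: "p \<noteq> 0"
  have "((\<lambda>p. q / \<bar>p\<bar>) has_real_derivative ((0 * \<bar>p\<bar> - q * (p/\<bar>p\<bar>)) / (\<bar>p\<bar> * \<bar>p\<bar>))) (at p)"
    using DERIV_divide[OF DERIV_const d_abs[OF p]] p by simp
  from DERIV_chain2[OF arsinh_real_has_field_derivative this] show ?thesis by simp
qed

lemma d_cube: "((\<lambda>p::real. p^3/6) has_real_derivative (p^2/2)) (at p)"
  by (auto intro!: derivative_eq_intros simp: field_simps power2_eq_square)

lemma d_lin: "((\<lambda>p::real. p*q/3) has_real_derivative (q/3)) (at p)"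
  by (auto intro!: derivative_eq_intros)

lemma Kf_deriv:
  assumes p: "p \<noteq> 0"
  shows "((\<lambda>p. Kf p q) has_real_derivative Ff p q) (at p)"
proof -
  have pos: "q^2 + p^2 > 0" using p by (simp add: add_nonneg_pos)
  have D: "((\<lambda>p. p^3/6 * arsinh (q/\<bar>p\<bar>) + q^3/6 * arsinh (p/\<bar>q\<bar>) + p*q/3 * sqrt (q^2+p^2))
     has_real_derivative
     ((p^2/2 * arsinh (q/\<bar>p\<bar>) + (1 / sqrt ((q/\<bar>p\<bar>)^2+1) * ((0 * \<bar>p\<bar> - q * (p/\<bar>p\<bar>)) / (\<bar>p\<bar> * \<bar>p\<bar>))) * (p^3/6))
      + q^3/6 * (1 / sqrt ((p/\<bar>q\<bar>)^2+1) * (1/\<bar>q\<bar>))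
      + (q/3 * sqrt (q^2+p^2) + (inverse (sqrt (q^2+p^2)) / 2 * (2 * p)) * (p*q/3)))) (at p)"
    by (rule DERIV_add[OF DERIV_add[OF DERIV_mult[OF d_cube d_T1[OF p]] DERIV_cmult[OF d_ar]]
          DERIV_mult[OF d_lin d_sqrt[OF pos]]])
  define s where "s = sqrt (q^2+p^2)"
  have s: "s > 0" using pos by (simp add: s_def)
  have ss: "s^2 = q^2+p^2" using pos by (simp add: s_def)
  have e1: "sqrt ((q/\<bar>p\<bar>)^2+1) = s / \<bar>p\<bar>" using sqrt_div_aux[OF p, of q] by (simp add: s_def add.commute)
  have e3: "sqrt (p^2+q^2) = s" by (simp add: s_def add.commute)
  have pp: "\<bar>p\<bar> * \<bar>p\<bar> = p^2" by (simp add: power2_eq_square)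
  have eq: "(p^2/2 * arsinh (q/\<bar>p\<bar>) + (1 / sqrt ((q/\<bar>p\<bar>)^2+1) * ((0 * \<bar>p\<bar> - q * (p/\<bar>p\<bar>)) / (\<bar>p\<bar> * \<bar>p\<bar>))) * (p^3/6))
      + q^3/6 * (1 / sqrt ((p/\<bar>q\<bar>)^2+1) * (1/\<bar>q\<bar>))
      + (q/3 * sqrt (q^2+p^2) + (inverse (sqrt (q^2+p^2)) / 2 * (2 * p)) * (p*q/3)) = Ff p q"
  proof (cases "q = 0")
    case True
    then show ?thesis using p by (simp add: Ff_def)
  next
    case False
    have e2: "sqrt ((p/\<bar>q\<bar>)^2+1) = s / \<bar>q\<bar>" using sqrt_div_aux[OF False, of p] by (simp add: s_def)
    show ?thesis unfolding Ff_def e1 e2 e3 pp s_def[symmetric] using s ss p False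
      apply (simp add: field_simps power2_eq_square power3_eq_cube)
      by algebra
  qed
  show ?thesis using DERIV_cong[OF D eq] unfolding Kf_def .
qed

lemma isCont_div_const: "isCont f x \<Longrightarrow> isCont (\<lambda>x. f x / (c::real)) x"
  by (cases "c = 0") (auto intro!: continuous_intros)

lemma T1_bound: "\<bar>(p::real)^3/6 * arsinh (q/\<bar>p\<bar>)\<bar> \<le> p^2 * \<bar>q\<bar> / 3"
proof (cases "p = 0")
  case True then show ?thesis by simp
next
  case False
  have "\<bar>p^3/6 * arsinh (q/\<bar>p\<bar>)\<bar> = \<bar>p\<bar>^3/6 * \<bar>arsinh (q/\<bar>p\<bar>)\<bar>"
    by (simp add: abs_mult power_abs)
  also have "\<dots> \<le> \<bar>p\<bar>^3/6 * (2 * \<bar>q/\<bar>p\<bar>\<bar>)"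
    by (rule mult_left_mono[OF arsinh_bound]) simp
  also have "\<dots> = p^2 * \<bar>q\<bar> / 3" using False
    by (simp add: abs_div power2_eq_square power3_eq_cube field_simps)
  finally show ?thesis .
qed

lemma T1_cont: "isCont (\<lambda>p::real. p^3/6 * arsinh (q/\<bar>p\<bar>)) x"
proof (cases "x = 0")
  case False
  then show ?thesis by (intro isCont_div_const continuous_intros) auto
next
  case True
  have "((\<lambda>p. p^3/6 * arsinh (q/\<bar>p\<bar>)) \<longlongrightarrow> 0) (at 0)"
  proof (rule Lim_null_comparison)
    show "\<forall>\<^sub>F p in at 0. norm (p^3/6 * arsinh (q/\<bar>p\<bar>)) \<le> p^2 * \<bar>q\<bar> / 3"
      using T1_bound by (simp add: always_eventually)
    have "((\<lambda>p::real. p^2 * \<bar>q\<bar> / 3) \<longlongrightarrow> 0^2 * \<bar>q\<bar> / 3) (at 0)"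
      by (intro tendsto_intros) auto
    then show "((\<lambda>p::real. p^2 * \<bar>q\<bar> / 3) \<longlongrightarrow> 0) (at 0)" by simp
  qed
  then show ?thesis using True by (simp add: isCont_def)
qed

lemma Kf_cont: "continuous_on A (\<lambda>p. Kf p q)"
proof -
  have "isCont (\<lambda>p. Kf p q) x" for x
    unfolding Kf_def
    by (intro isCont_div_const continuous_intros T1_cont) 
  then show ?thesis by (simp add: continuous_at_imp_continuous_on)
qed

lemma Ff_cont: "continuous_on A (\<lambda>v. Ff u v)"
proof -
  have "isCont (\<lambda>v. Ff u v) x" for x
    unfolding Ff_def
    by (intro isCont_div_const continuous_intros) 
  then show ?thesis by (simp add: continuous_at_imp_continuous_on)
qed

lemma Ff_zero: "Ff x (0::real) = 0" by (simp add: Ff_def)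

lemma inner_F: "oint 0 w (\<lambda>y::real. sqrt (x^2+y^2)) = Ff x w"
proof -
  have "oint 0 w (\<lambda>y. sqrt (x^2+y^2)) = Ff x w - Ff x 0"
  proof (rule oint_ftc[where S="{0}"])
    show "continuous_on {min 0 w..max 0 w} (Ff x)" by (rule Ff_cont)
    fix y :: real assume "y \<notin> {0}"
    then have "x^2+y^2 > 0" by (simp add: add_nonneg_pos)
    then show "(Ff x has_real_derivative sqrt (x^2+y^2)) (at y)" using Ff_deriv by simp
  qed simp
  then show ?thesis by (simp add: Ff_zero)
qed

lemma ar: assumes "x * a > 0" shows "(b * x / a) / \<bar>x\<bar> = b / \<bar>(a::real)\<bar>"
proof (cases "a > 0")
  case True
  then have "x > 0" using assms by (simp add: zero_less_mult_iff)
  then show ?thesis using True by simp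
next
  case False
  then have "a < 0" "x < 0" using assms by (auto simp add: zero_less_mult_iff)
  then show ?thesis by simp
qed
lemma e: assumes "x * a > 0" shows "b * x / a / 2 * (\<bar>x/a\<bar> * sqrt (a^2+b^2)) = b * sqrt (a^2+b^2) / (2*a^2) * (x::real)^2"
proof -
  have "x / a > 0" using assms by (metis zero_less_divide_iff zero_less_mult_iff)
  then have "\<bar>x/a\<bar> = x/a" by (rule abs_of_pos)
  then show ?thesis using assms by (simp add: field_simps power2_eq_square)
qed

lemma Ff_line:
  assumes "x * a > 0"
  shows "Ff x (b * x / a) = (b * sqrt (a^2+b^2) / (2*a^2) + arsinh (b/\<bar>a\<bar>)/2) * x^2"
proof -
  have a: "a \<noteq> 0" and x: "x \<noteq> 0" using assms by auto
  have "x^2 + (b * x / a)^2 = (x/a)^2 * (a^2+b^2)" using a by (simp add: field_simps power2_eq_square)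
  then have sq: "sqrt (x^2 + (b * x / a)^2) = \<bar>x/a\<bar> * sqrt (a^2+b^2)"
    by (simp add: real_sqrt_mult real_sqrt_abs)
  note ar = ar[OF assms, of b]
  note e = e[OF assms, of b]
  show ?thesis unfolding Ff_def sq ar using e by (simp add: algebra_simps)
qed

lemma A1_closed: "A1 a b = A1f a b"
proof (cases "a = 0")
  case True then show ?thesis by (simp add: A1_def A1f_def)
next
  case False
  define C where "C = b * sqrt (a^2+b^2) / (2*a^2) + arsinh (b/\<bar>a\<bar>)/2"
  have "A1 a b = oint 0 a (\<lambda>x. Ff x (b * x / a))"
    using False by (simp add: A1_def inner_F)
  also have "\<dots> = C * a^3/3 - C * 0^3/3"
  proof (rule oint_ftc[where S="{}"])
    show "continuous_on {min 0 a..max 0 a} (\<lambda>x. C * x^3/3)" by (intro continuous_intros) auto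
    fix x assume x: "min 0 a < x" "x < max 0 a"
    then have "x * a > 0"
    proof (cases "a > 0")
      case True then show ?thesis using x by (simp add: min_def max_def)
    next
      case False then have "a < 0" using \<open>a \<noteq> 0\<close> by simp
      then show ?thesis using x by (simp add: min_def max_def mult_neg_neg)
    qed
    then have eq: "C * x^2 = Ff x (b * x / a)" using Ff_line C_def by simp
    have "((\<lambda>x. C * x^3/3) has_real_derivative (C * x^2)) (at x)"
      by (auto intro!: derivative_eq_intros simp: power2_eq_square)
    then show "((\<lambda>x. C * x^3/3) has_real_derivative Ff x (b * x / a)) (at x)" using eq by simp
  qed simp
  also have "\<dots> = A1f a b" using False unfolding C_def A1f_def
    by (simp add: field_simps power2_eq_square power3_eq_cube)
  finally show ?thesis .
qed

lemma inner_g: "integral {0..1} (\<lambda>x. sqrt ((x-a)^2 + c^2)) = Ff c (1-a) - Ff c (-a)"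
proof -
  have ic: "isCont (Ff c) y" for y
    using Ff_cont[of UNIV c] continuous_on_eq_continuous_at by blast
  have "oint 0 1 (\<lambda>x. sqrt ((x-a)^2 + c^2)) = Ff c (1-a) - Ff c (0-a)"
  proof (rule oint_ftc[where S="{a}" and f="\<lambda>x. Ff c (x-a)"])
    show "continuous_on {min 0 1..max 0 1} (\<lambda>x. Ff c (x-a))"
      by (intro continuous_at_imp_continuous_on ballI isCont_o2[OF _ ic]) (intro continuous_intros)
    fix x :: real assume "x \<notin> {a}"
    then have pos: "c^2 + (x-a)^2 > 0" by (simp add: add_nonneg_pos)
    have d1: "((\<lambda>x. x - a) has_real_derivative 1) (at x)" by (auto intro!: derivative_eq_intros)
    have "((\<lambda>x. Ff c (x-a)) has_real_derivative sqrt (c^2+(x-a)^2) * 1) (at x)"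
      by (rule DERIV_chain2[OF Ff_deriv[OF pos] d1])
    then show "((\<lambda>x. Ff c (x-a)) has_real_derivative sqrt ((x-a)^2 + c^2)) (at x)"
      by (simp add: add.commute)
  qed simp
  then show ?thesis by (simp add: oint_def)
qed

lemma outer_g: "integral {0..1} (\<lambda>y. Ff (y-b) p - Ff (y-b) q)
   = (Kf (1-b) p - Kf (1-b) q) - (Kf (-b) p - Kf (-b) q)"
proof -
  have ic: "isCont (\<lambda>s. Kf s r) y" for y r
    using Kf_cont[of UNIV r] continuous_on_eq_continuous_at by blast
  have "oint 0 1 (\<lambda>y. Ff (y-b) p - Ff (y-b) q) = (Kf (1-b) p - Kf (1-b) q) - (Kf (0-b) p - Kf (0-b) q)"
  proof (rule oint_ftc[where S="{b}" and f="\<lambda>y. Kf (y-b) p - Kf (y-b) q"])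
    show "continuous_on {min 0 1..max 0 1} (\<lambda>y. Kf (y-b) p - Kf (y-b) q)"
      by (intro continuous_at_imp_continuous_on ballI continuous_intros isCont_o2[OF _ ic])
    fix y :: real assume "y \<notin> {b}"
    then have nz: "y - b \<noteq> 0" by simp
    have d1: "((\<lambda>y. y - b) has_real_derivative 1) (at y)" by (auto intro!: derivative_eq_intros)
    have "((\<lambda>y. Kf (y-b) p - Kf (y-b) q) has_real_derivative (Ff (y-b) p * 1 - Ff (y-b) q * 1)) (at y)"
      by (rule DERIV_diff[OF DERIV_chain2[OF Kf_deriv[OF nz] d1] DERIV_chain2[OF Kf_deriv[OF nz] d1]])
    then show "((\<lambda>y. Kf (y-b) p - Kf (y-b) q) has_real_derivative (Ff (y-b) p - Ff (y-b) q)) (at y)"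
      by simp
  qed simp
  then show ?thesis by (simp add: oint_def)
qed

lemma Kf_A1f: "Kf p q = A1f p q + A1f q p"
proof -
  have "sqrt (p^2+q^2) = sqrt (q^2+p^2)" by (simp add: add.commute)
  then show ?thesis unfolding Kf_def A1f_def by (simp add: field_simps)
qed

lemma A1f_neg1: "A1f (-x) y = - A1f x y" by (simp add: A1f_def)
lemma A1f_neg2: "A1f x (-y) = - A1f x y" by (simp add: A1f_def)

theorem theorem24:
  fixes a b :: real
  shows "g1 a b = A1 a b + A1 b a + A1 b (1 - a) + A1 (1 - a) b
           + A1 (1 - a) (1 - b) + A1 (1 - b) (1 - a) + A1 (1 - b) a + A1 a (1 - b)"
proof -
  have "g1 a b = integral {0..1} (\<lambda>y. Ff (y-b) (1-a) - Ff (y-b) (-a))"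
    unfolding g1_def inner_g ..
  also have "\<dots> = (Kf (1-b) (1-a) - Kf (1-b) (-a)) - (Kf (-b) (1-a) - Kf (-b) (-a))"
    by (rule outer_g)
  also have "\<dots> = A1f a b + A1f b a + A1f b (1 - a) + A1f (1 - a) b
           + A1f (1 - a) (1 - b) + A1f (1 - b) (1 - a) + A1f (1 - b) a + A1f a (1 - b)"
    unfolding Kf_A1f A1f_neg1 A1f_neg2 by simp
  finally show ?thesis by (simp only: A1_closed)
qed

end
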